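(* The normalizer of $\operatorname{IET}^{+}$ in $\operatorname{IET}^{\bowtie}$ is $\operatorname{IET}^{\pm}$.
   Context: $X=[0,1[$. $\widehat{\operatorname{IET}^{\bowtie}}$ is the group of bijections $f:X\to X$ for which there is a finite partition of $X$ into intervals $[a,b[$ such that on each $]a,b[$, $f$ has the form $x\mapsto x+c$ or $x\mapsto -x+c$; $\widehat{\operatorname{IET}^{+}}$ is the subgroup of those for which only the form $x\mapsto x+c$ occurs. With ${\mathfrak S}_{\mathrm{fin}}$ the normal subgroup of finitely supported permutations, $\operatorname{IET}^{\bowtie}=\widehat{\operatorname{IET}^{\bowtie}}/{\mathfrak S}_{\mathrm{fin}}$ and $\operatorname{IET}^{+}=\widehat{\operatorname{IET}^{+}}/{\mathfrak S}_{\mathrm{fin}}$. Let $\mathcal R\in\operatorname{IET}^{\bowtie}$ be the class of any bijection of $X$ agreeing with $x\mapsto 1-x$ outside a finite set. Define $\operatorname{IET}^{-}=\mathcal R\cdot\operatorname{IET}^{+}$ and $\operatorname{IET}^{\pm}=\operatorname{IET}^{+}\cup\operatorname{IET}^{-}$ (a subgroup). *)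

theory Defs
  imports "HOL-Analysis.Analysis" "HOL-Algebra.Group_Action"
begin

definition IET_X :: "real set" where
  "IET_X = {0..<1}"

definition piecewise_isom :: "bool \<Rightarrow> (real \<Rightarrow> real) \<Rightarrow> bool" where
  "piecewise_isom flips f \<longleftrightarrow>
     (\<exists>(n::nat) (a::nat \<Rightarrow> real). a 0 = 0 \<and> a n = 1 \<and> (\<forall>i<n. a i < a (Suc i)) \<and>
        (\<forall>i<n. \<exists>c. (\<forall>x\<in>{a i<..<a (Suc i)}. f x = x + c) \<or>
                     (flips \<and> (\<forall>x\<in>{a i<..<a (Suc i)}. f x = - x + c))))"

text \<open>Bijections of X, encoded as functions on the reals that are the identity outside X.\<close>
definition bij_X :: "(real \<Rightarrow> real) set" where
  "bij_X = {f. bij_betw f IET_X IET_X \<and> (\<forall>x. x \<notin> IET_X \<longrightarrow> f x = x)}"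

definition IET_hat_bowtie :: "(real \<Rightarrow> real) monoid" where
  "IET_hat_bowtie = \<lparr>carrier = {f \<in> bij_X. piecewise_isom True f}, mult = (\<circ>), one = id\<rparr>"

definition IET_hat_plus :: "(real \<Rightarrow> real) set" where
  "IET_hat_plus = {f \<in> bij_X. piecewise_isom False f}"

definition S_fin :: "(real \<Rightarrow> real) set" where
  "S_fin = {f \<in> bij_X. finite {x. f x \<noteq> x}}"

definition IET_bowtie :: "(real \<Rightarrow> real) set monoid" where
  "IET_bowtie = IET_hat_bowtie Mod S_fin"

definition IET_plus :: "(real \<Rightarrow> real) set set" where
  "IET_plus = (\<lambda>f. S_fin #>\<^bsub>IET_hat_bowtie\<^esub> f) ` IET_hat_plus"

text \<open>A bijection of X agreeing with x |-> 1 - x outside the finite set {0}.\<close>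
definition rho_X :: "real \<Rightarrow> real" where
  "rho_X x = (if 0 < x \<and> x < 1 then 1 - x else x)"

definition IET_R :: "(real \<Rightarrow> real) set" where
  "IET_R = S_fin #>\<^bsub>IET_hat_bowtie\<^esub> rho_X"

definition IET_minus :: "(real \<Rightarrow> real) set set" where
  "IET_minus = (\<lambda>k. IET_R \<otimes>\<^bsub>IET_bowtie\<^esub> k) ` IET_plus"

definition IET_pm :: "(real \<Rightarrow> real) set set" where
  "IET_pm = IET_plus \<union> IET_minus"

end

theory Submission
  imports Defs
begin

definition PIs :: "real set \<Rightarrow> (real \<Rightarrow> real) \<Rightarrow> bool" where
  "PIs S f \<longleftrightarrow> (\<exists>F. finite F \<and> (\<forall>u v. 0 \<le> u \<longrightarrow> u < v \<longrightarrow> v \<le> 1 \<longrightarrow> F \<inter> {u<..<v} = {} \<longrightarrow>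
      (\<exists>\<sigma>\<in>S. \<exists>c. \<forall>x\<in>{u<..<v}. f x = \<sigma> * x + c)))"

lemma piece_find:
  fixes a :: "nat \<Rightarrow> real"
  assumes "a 0 = 0" "a n = 1" "0 \<le> x" "x < 1"
  shows "\<exists>i<n. a i \<le> x \<and> x < a (Suc i)"
proof -
  define J where "J = {j. j \<le> n \<and> a j \<le> x}"
  have fin: "finite J" unfolding J_def by auto
  have "0 \<in> J" using assms unfolding J_def by auto
  define i where "i = Max J"
  have iJ: "i \<in> J" unfolding i_def using Max_in[OF fin] \<open>0 \<in> J\<close> by auto
  hence "i \<le> n" "a i \<le> x" unfolding J_def by auto
  have "i \<noteq> n" using \<open>a i \<le> x\<close> assms by auto
  hence "i < n" using \<open>i \<le> n\<close> by auto
  have "Suc i \<notin> J"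
  proof
    assume "Suc i \<in> J" hence "Suc i \<le> i" unfolding i_def using fin by (simp add: Max_ge)
    thus False by simp
  qed
  hence "x < a (Suc i)" using \<open>i < n\<close> unfolding J_def by auto
  thus ?thesis using \<open>i < n\<close> \<open>a i \<le> x\<close> by blast
qed

lemma PIs_of_part:
  fixes a :: "nat \<Rightarrow> real"
  assumes "a 0 = 0" "a n = 1"
    and "\<forall>i<n. \<exists>\<sigma>\<in>S. \<exists>c. \<forall>x\<in>{a i<..<a (Suc i)}. f x = \<sigma> * x + c"
  shows "PIs S f"
  unfolding PIs_def
proof (intro exI[of _ "a ` {..n}"] conjI allI impI)
  fix u v :: real
  assume uv: "0 \<le> u" "u < v" "v \<le> 1" "a ` {..n} \<inter> {u<..<v} = {}"
  obtain i where i: "i < n" "a i \<le> u" "u < a (Suc i)" using piece_find[OF assms(1,2), of u] uv by auto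
  have "a (Suc i) \<in> a ` {..n}" using i(1) by auto
  hence "a (Suc i) \<notin> {u<..<v}" using uv(4) by blast
  hence "v \<le> a (Suc i)" using i by auto
  obtain \<sigma> c where "\<sigma> \<in> S" "\<forall>x\<in>{a i<..<a (Suc i)}. f x = \<sigma> * x + c" using assms(3) i(1) by blast
  thus "\<exists>\<sigma>\<in>S. \<exists>c. \<forall>x\<in>{u<..<v}. f x = \<sigma> * x + c"
    using i \<open>v \<le> a (Suc i)\<close> by (intro bexI[of _ \<sigma>] exI[of _ c]) auto
qed simp

lemma strict_sorted_idx:
  fixes xs :: "real list"
  assumes "sorted_wrt (<) xs" "i < length xs" "k < length xs" "xs ! i < xs ! k"
  shows "i < k"
proof (rule ccontr)
  assume "\<not> i < k"
  hence "k < i \<or> k = i" by auto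
  thus False
  proof
    assume "k < i" thus False using sorted_wrt_nth_less[OF assms(1) _ assms(2)] assms(4) by fastforce
  qed (use assms in auto)
qed

lemma part_of_PIs:
  assumes "PIs S f"
  obtains n and a :: "nat \<Rightarrow> real" where "a 0 = 0" "a n = 1" "\<forall>i<n. a i < a (Suc i)"
           "\<forall>i<n. \<exists>\<sigma>\<in>S. \<exists>c. \<forall>x\<in>{a i<..<a (Suc i)}. f x = \<sigma> * x + c"
proof -
  obtain F where F: "finite F" "\<And>u v. 0 \<le> u \<Longrightarrow> u < v \<Longrightarrow> v \<le> 1 \<Longrightarrow> F \<inter> {u<..<v} = {} \<Longrightarrow>
      (\<exists>\<sigma>\<in>S. \<exists>c. \<forall>x\<in>{u<..<v}. f x = \<sigma> * x + c)"
    using assms unfolding PIs_def by blast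
  define A where "A = {0,1} \<union> (F \<inter> {0<..<1::real})"
  have finA: "finite A" unfolding A_def using F(1) by auto
  define xs where "xs = sorted_list_of_set A"
  have sxs: "sorted_wrt (<) xs" unfolding xs_def by simp
  have setxs: "set xs = A" unfolding xs_def using finA by simp
  have A01: "\<And>y. y \<in> A \<Longrightarrow> 0 \<le> y \<and> y \<le> 1" unfolding A_def by auto
  have "card {0,1::real} \<le> card A" by (rule card_mono[OF finA]) (auto simp: A_def)
  hence "card A \<ge> 2" by simp
  hence len: "length xs \<ge> 2" unfolding xs_def by simp
  define n where "n = length xs - 1"
  define a where "a i = xs ! i" for i
  have n_len: "n < length xs" unfolding n_def using len by auto
  have inA: "\<And>i. i < length xs \<Longrightarrow> a i \<in> A" unfolding a_def using setxs nth_mem by blast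
  have mono: "\<And>i. i < n \<Longrightarrow> a i < a (Suc i)"
    unfolding a_def using sorted_wrt_nth_less[OF sxs] n_len by auto
  have a0: "a 0 = 0"
  proof -
    have "0 \<in> set xs" using setxs unfolding A_def by auto
    then obtain j where j: "j < length xs" "xs ! j = 0" by (meson in_set_conv_nth)
    show ?thesis
    proof (cases "j = 0")
      case True thus ?thesis using j unfolding a_def by simp
    next
      case False
      hence "a 0 < a j" unfolding a_def using sorted_wrt_nth_less[OF sxs, of 0 j] j by auto
      moreover have "a 0 \<ge> 0" using A01[OF inA[of 0]] len by fastforce
      ultimately show ?thesis using j unfolding a_def by simp
    qed
  qed
  have an: "a n = 1"
  proof -
    have "1 \<in> set xs" using setxs unfolding A_def by auto
    then obtain j where j: "j < length xs" "xs ! j = 1" by (meson in_set_conv_nth)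
    show ?thesis
    proof (cases "j = n")
      case True thus ?thesis using j unfolding a_def by simp
    next
      case False
      hence "j < n" using j unfolding n_def by auto
      hence "a j < a n" unfolding a_def using sorted_wrt_nth_less[OF sxs, of j n] n_len by auto
      moreover have "a n \<le> 1" using A01[OF inA[OF n_len]] by auto
      ultimately show ?thesis using j unfolding a_def by simp
    qed
  qed
  have pieces: "\<forall>i<n. \<exists>\<sigma>\<in>S. \<exists>c. \<forall>x\<in>{a i<..<a (Suc i)}. f x = \<sigma> * x + c"
  proof (intro allI impI)
    fix i assume i: "i < n"
    have il: "i < length xs" "Suc i < length xs" using i n_len by auto
    have "F \<inter> {a i<..<a (Suc i)} = {}"
    proof (rule ccontr)
      assume "F \<inter> {a i<..<a (Suc i)} \<noteq> {}"
      then obtain y where y: "y \<in> F" "a i < y" "y < a (Suc i)" by auto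
      have "0 \<le> a i" "a (Suc i) \<le> 1" using A01[OF inA[OF il(1)]] A01[OF inA[OF il(2)]] by auto
      hence "y \<in> A" unfolding A_def using y by auto
      then obtain k where k: "k < length xs" "xs ! k = y" using setxs by (metis in_set_conv_nth)
      have "i < k" using strict_sorted_idx[OF sxs il(1) k(1)] k y unfolding a_def by auto
      moreover have "k < Suc i" using strict_sorted_idx[OF sxs k(1) il(2)] k y unfolding a_def by auto
      ultimately show False by auto
    qed
    moreover have "0 \<le> a i" "a (Suc i) \<le> 1" using A01[OF inA[OF il(1)]] A01[OF inA[OF il(2)]] by auto
    ultimately show "\<exists>\<sigma>\<in>S. \<exists>c. \<forall>x\<in>{a i<..<a (Suc i)}. f x = \<sigma> * x + c"
      using F(2) mono[OF i] by blast
  qed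
  have m: "\<forall>i<n. a i < a (Suc i)" using mono by blast
  show thesis by (rule that[OF a0 an m pieces])
qed

lemma PIs_mono:
  assumes "S \<subseteq> T" "PIs S f" shows "PIs T f"
proof -
  obtain F where F: "finite F" "\<And>u v. 0 \<le> u \<Longrightarrow> u < v \<Longrightarrow> v \<le> 1 \<Longrightarrow> F \<inter> {u<..<v} = {} \<Longrightarrow>
      (\<exists>\<sigma>\<in>S. \<exists>c. \<forall>x\<in>{u<..<v}. f x = \<sigma> * x + c)"
    using assms(2) unfolding PIs_def by blast
  show ?thesis unfolding PIs_def
  proof (intro exI[of _ F] conjI allI impI)
    fix u v :: real assume "0 \<le> u" "u < v" "v \<le> 1" "F \<inter> {u<..<v} = {}"
    then obtain \<sigma> c where "\<sigma> \<in> S" "\<forall>x\<in>{u<..<v}. f x = \<sigma> * x + c" using F(2) by blast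
    thus "\<exists>\<sigma>\<in>T. \<exists>c. \<forall>x\<in>{u<..<v}. f x = \<sigma> * x + c" using assms(1) by blast
  qed (rule F(1))
qed

lemma pw_True: "piecewise_isom True f \<longleftrightarrow> PIs {1,-1} f"
proof
  assume "piecewise_isom True f"
  then obtain n a where a: "a 0 = 0" "a n = 1" "\<forall>i<n. \<exists>c. (\<forall>x\<in>{a i<..<a (Suc i)}. f x = x + c) \<or>
                     (\<forall>x\<in>{a i<..<a (Suc i)}. f x = - x + c)"
    unfolding piecewise_isom_def by auto
  have "\<forall>i<n. \<exists>\<sigma>\<in>{1,-1}. \<exists>c. \<forall>x\<in>{a i<..<a (Suc i)}. f x = \<sigma> * x + c"
  proof (intro allI impI)
    fix i assume "i < n"
    then obtain c where disj: "(\<forall>x\<in>{a i<..<a (Suc i)}. f x = x + c) \<or> (\<forall>x\<in>{a i<..<a (Suc i)}. f x = - x + c)"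
      using a(3) by blast
    show "\<exists>\<sigma>\<in>{1,-1}. \<exists>c. \<forall>x\<in>{a i<..<a (Suc i)}. f x = \<sigma> * x + c"
    proof (cases "\<forall>x\<in>{a i<..<a (Suc i)}. f x = x + c")
      case True then show ?thesis by (intro bexI[of _ 1] exI[of _ c]) auto
    next
      case False
      with disj have "\<forall>x\<in>{a i<..<a (Suc i)}. f x = - x + c" by blast
      then show ?thesis by (intro bexI[of _ "-1"] exI[of _ c]) auto
    qed
  qed
  thus "PIs {1,-1} f" by (rule PIs_of_part[OF a(1,2)])
next
  assume as: "PIs {1,-1} f"
  obtain n a where a: "a 0 = 0" "a n = 1" "\<forall>i<n. a i < a (Suc i)"
      "\<forall>i<n. \<exists>\<sigma>\<in>{1,-1}. \<exists>c. \<forall>x\<in>{a i<..<a (Suc i)}. f x = \<sigma> * x + c"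
    by (rule part_of_PIs[OF as])
  have "\<forall>i<n. \<exists>c. (\<forall>x\<in>{a i<..<a (Suc i)}. f x = x + c) \<or> (True \<and> (\<forall>x\<in>{a i<..<a (Suc i)}. f x = - x + c))"
  proof (intro allI impI)
    fix i assume "i < n"
    then obtain \<sigma> c where sc: "\<sigma> \<in> {1,-1}" "\<forall>x\<in>{a i<..<a (Suc i)}. f x = \<sigma> * x + c" using a(4) by blast
    show "\<exists>c. (\<forall>x\<in>{a i<..<a (Suc i)}. f x = x + c) \<or> (True \<and> (\<forall>x\<in>{a i<..<a (Suc i)}. f x = - x + c))"
    proof (cases "\<sigma> = 1")
      case True thus ?thesis using sc(2) by (intro exI[of _ c]) simp
    next
      case False hence "\<sigma> = -1" using sc(1) by simp
      thus ?thesis using sc(2) by (intro exI[of _ c]) simp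
    qed
  qed
  thus "piecewise_isom True f" unfolding piecewise_isom_def
    by (intro exI[of _ n] exI[of _ a] conjI) (rule a(1), rule a(2), rule a(3), assumption)
qed

lemma pw_False: "piecewise_isom False f \<longleftrightarrow> PIs {1} f"
proof
  assume "piecewise_isom False f"
  then obtain n a where a: "a 0 = 0" "a n = 1" "\<forall>i<n. \<exists>c. (\<forall>x\<in>{a i<..<a (Suc i)}. f x = x + c)"
    unfolding piecewise_isom_def by auto
  have "\<forall>i<n. \<exists>\<sigma>\<in>{1}. \<exists>c. \<forall>x\<in>{a i<..<a (Suc i)}. f x = \<sigma> * x + c"
    using a(3) by auto
  thus "PIs {1} f" by (rule PIs_of_part[OF a(1,2)])
next
  assume as: "PIs {1} f"
  obtain n a where a: "a 0 = 0" "a n = 1" "\<forall>i<n. a i < a (Suc i)"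
      "\<forall>i<n. \<exists>\<sigma>\<in>{1}. \<exists>c. \<forall>x\<in>{a i<..<a (Suc i)}. f x = \<sigma> * x + c"
    by (rule part_of_PIs[OF as])
  have "\<forall>i<n. \<exists>c. (\<forall>x\<in>{a i<..<a (Suc i)}. f x = x + c) \<or> (False \<and> (\<forall>x\<in>{a i<..<a (Suc i)}. f x = - x + c))"
  proof (intro allI impI)
    fix i assume "i < n"
    then obtain c where "\<forall>x\<in>{a i<..<a (Suc i)}. f x = 1 * x + c" using a(4) by blast
    thus "\<exists>c. (\<forall>x\<in>{a i<..<a (Suc i)}. f x = x + c) \<or> (False \<and> (\<forall>x\<in>{a i<..<a (Suc i)}. f x = - x + c))"
      by (intro exI[of _ c]) simp
  qed
  thus "piecewise_isom False f" unfolding piecewise_isom_def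
    by (intro exI[of _ n] exI[of _ a] conjI) (rule a(1), rule a(2), rule a(3), assumption)
qed

definition invX :: "(real \<Rightarrow> real) \<Rightarrow> real \<Rightarrow> real" where
  "invX f y = (if y \<in> IET_X then inv_into IET_X f y else y)"

lemma X_iff: "x \<in> IET_X \<longleftrightarrow> 0 \<le> x \<and> x < 1" unfolding IET_X_def by auto

lemma img_interval:
  fixes \<sigma> c u v :: real
  assumes "\<sigma> \<in> {1,-1}" "u < v"
  obtains u' v' where "u' < v'" "\<And>x. x \<in> {u<..<v} \<Longrightarrow> \<sigma> * x + c \<in> {u'<..<v'}"
    "\<And>y. y \<in> {u'<..<v'} \<Longrightarrow> \<sigma> * (y - c) \<in> {u<..<v} \<and> \<sigma> * (\<sigma> * (y - c)) + c = y"
proof (cases "\<sigma> = 1")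
  case True
  show ?thesis by (rule that[of "u + c" "v + c"]) (use assms True in auto)
next
  case False
  hence s: "\<sigma> = -1" using assms by auto
  show ?thesis by (rule that[of "c - v" "c - u"]) (use assms s in auto)
qed

lemma PIs_comp:
  assumes f: "PIs S1 f" and g: "PIs S2 g" and S2: "S2 \<subseteq> {1,-1}"
    and inj: "inj_on g IET_X" and gX: "g ` IET_X \<subseteq> IET_X"
    and T: "\<And>s1 s2. s1 \<in> S1 \<Longrightarrow> s2 \<in> S2 \<Longrightarrow> s1 * s2 \<in> T"
  shows "PIs T (f \<circ> g)"
proof -
  obtain Ff where Ff: "finite Ff" "\<And>u v. 0 \<le> u \<Longrightarrow> u < v \<Longrightarrow> v \<le> 1 \<Longrightarrow> Ff \<inter> {u<..<v} = {} \<Longrightarrow>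
      (\<exists>\<sigma>\<in>S1. \<exists>c. \<forall>x\<in>{u<..<v}. f x = \<sigma> * x + c)"
    using f unfolding PIs_def by blast
  obtain Fg where Fg: "finite Fg" "\<And>u v. 0 \<le> u \<Longrightarrow> u < v \<Longrightarrow> v \<le> 1 \<Longrightarrow> Fg \<inter> {u<..<v} = {} \<Longrightarrow>
      (\<exists>\<sigma>\<in>S2. \<exists>c. \<forall>x\<in>{u<..<v}. g x = \<sigma> * x + c)"
    using g unfolding PIs_def by blast
  define F where "F = Fg \<union> (g -` Ff \<inter> IET_X)"
  have finF: "finite F" unfolding F_def using Fg(1) finite_vimage_IntI[OF Ff(1) inj] by auto
  show ?thesis unfolding PIs_def
  proof (intro exI[of _ F] conjI allI impI)
    fix u v :: real
    assume uv: "0 \<le> u" "u < v" "v \<le> 1" "F \<inter> {u<..<v} = {}"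
    have "Fg \<inter> {u<..<v} = {}" using uv(4) unfolding F_def by auto
    then obtain \<sigma>2 c2 where s2: "\<sigma>2 \<in> S2" and g2: "\<forall>x\<in>{u<..<v}. g x = \<sigma>2 * x + c2"
      using Fg(2)[OF uv(1-3)] by blast
    have s2': "\<sigma>2 \<in> {1,-1}" using s2 S2 by auto
    obtain u' v' where uv': "u' < v'" "\<And>x. x \<in> {u<..<v} \<Longrightarrow> \<sigma>2 * x + c2 \<in> {u'<..<v'}"
      "\<And>y. y \<in> {u'<..<v'} \<Longrightarrow> \<sigma>2 * (y - c2) \<in> {u<..<v} \<and> \<sigma>2 * (\<sigma>2 * (y - c2)) + c2 = y"
      using img_interval[OF s2' uv(2)] by metis
    have inX: "\<And>x. x \<in> {u<..<v} \<Longrightarrow> x \<in> IET_X" using uv unfolding X_iff by auto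
    have pre: "\<And>y. y \<in> {u'<..<v'} \<Longrightarrow> \<exists>x\<in>{u<..<v}. g x = y"
    proof -
      fix y assume y: "y \<in> {u'<..<v'}"
      show "\<exists>x\<in>{u<..<v}. g x = y"
        using uv'(3)[OF y] g2 by (intro bexI[of _ "\<sigma>2 * (y - c2)"]) auto
    qed
    have yX: "\<And>y. y \<in> {u'<..<v'} \<Longrightarrow> y \<in> IET_X"
      using pre inX gX by blast
    have u'0: "0 \<le> u'"
    proof (rule ccontr)
      assume "\<not> 0 \<le> u'"
      define y where "y = (u' + min v' 0) / 2"
      have "y \<in> {u'<..<v'}" "y < 0" unfolding y_def using uv'(1) \<open>\<not> 0 \<le> u'\<close> by auto
      thus False using yX unfolding X_iff by fastforce
    qed
    have v'1: "v' \<le> 1"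
    proof (rule ccontr)
      assume "\<not> v' \<le> 1"
      define y where "y = (v' + max u' 1) / 2"
      have "y \<in> {u'<..<v'}" "y > 1" unfolding y_def using uv'(1) \<open>\<not> v' \<le> 1\<close> by auto
      thus False using yX unfolding X_iff by fastforce
    qed
    have "Ff \<inter> {u'<..<v'} = {}"
    proof (rule ccontr)
      assume "Ff \<inter> {u'<..<v'} \<noteq> {}"
      then obtain y where y: "y \<in> Ff" "y \<in> {u'<..<v'}" by blast
      then obtain x where x: "x \<in> {u<..<v}" "g x = y" using pre by blast
      have "x \<in> F" unfolding F_def using x y inX[OF x(1)] by auto
      thus False using uv(4) x(1) by blast
    qed
    then obtain \<sigma>1 c1 where s1: "\<sigma>1 \<in> S1" and f1: "\<forall>y\<in>{u'<..<v'}. f y = \<sigma>1 * y + c1"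
      using Ff(2)[OF u'0 uv'(1) v'1] by blast
    have "\<forall>x\<in>{u<..<v}. (f \<circ> g) x = (\<sigma>1 * \<sigma>2) * x + (\<sigma>1 * c2 + c1)"
    proof
      fix x assume x: "x \<in> {u<..<v}"
      have "(f \<circ> g) x = f (\<sigma>2 * x + c2)" using g2 x by simp
      also have "\<dots> = \<sigma>1 * (\<sigma>2 * x + c2) + c1" using f1 uv'(2)[OF x] by blast
      finally show "(f \<circ> g) x = (\<sigma>1 * \<sigma>2) * x + (\<sigma>1 * c2 + c1)" by (simp add: algebra_simps)
    qed
    thus "\<exists>\<sigma>\<in>T. \<exists>c. \<forall>x\<in>{u<..<v}. (f \<circ> g) x = \<sigma> * x + c"
      using T[OF s1 s2] by blast
  qed (rule finF)
qed

lemma part_bounds: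
  fixes a :: "nat \<Rightarrow> real"
  assumes "a 0 = 0" "a n = 1" "\<forall>i<n. a i < a (Suc i)" "i \<le> n"
  shows "0 \<le> a i \<and> a i \<le> 1"
proof -
  have mono: "a i \<le> a j" if "i \<le> j" "j \<le> n" for i j
    using that
  proof (induction j)
    case 0 thus ?case by simp
  next
    case (Suc j)
    show ?case
    proof (cases "i = Suc j")
      case True thus ?thesis by simp
    next
      case False
      hence "i \<le> j" using Suc.prems by auto
      hence "a i \<le> a j" using Suc by auto
      also have "a j < a (Suc j)" using assms(3) Suc.prems by auto
      finally show ?thesis by simp
    qed
  qed
  show ?thesis using mono[of 0 i] mono[of i n] assms by auto
qed

lemma bijX_D:
  assumes "f \<in> bij_X"
  shows "bij_betw f IET_X IET_X" "\<And>x. x \<notin> IET_X \<Longrightarrow> f x = x" "inj_on f IET_X" "f ` IET_X = IET_X"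
  using assms unfolding bij_X_def bij_betw_def by auto

lemma invX_f: assumes "f \<in> bij_X" shows "invX f (f x) = x"
proof (cases "x \<in> IET_X")
  case True
  hence "f x \<in> IET_X" using bijX_D(4)[OF assms] by blast
  thus ?thesis unfolding invX_def using True bijX_D(3)[OF assms] by (simp add: inv_into_f_f)
next
  case False
  thus ?thesis unfolding invX_def using bijX_D(2)[OF assms] by simp
qed

lemma f_invX: assumes "f \<in> bij_X" shows "f (invX f y) = y"
proof (cases "y \<in> IET_X")
  case True
  thus ?thesis unfolding invX_def using bijX_D(4)[OF assms] by (simp add: f_inv_into_f)
next
  case False
  thus ?thesis unfolding invX_def using bijX_D(2)[OF assms] by simp
qed

lemma bijX_inj: assumes "f \<in> bij_X" shows "inj f"
  by (metis assms injI invX_f)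

lemma invX_bij: assumes "f \<in> bij_X" shows "invX f \<in> bij_X"
proof -
  have "bij_betw (inv_into IET_X f) IET_X IET_X"
    using bij_betw_inv_into[OF bijX_D(1)[OF assms]] .
  hence "bij_betw (invX f) IET_X IET_X"
    by (rule bij_betw_cong[THEN iffD1, rotated]) (simp add: invX_def)
  thus ?thesis unfolding bij_X_def invX_def by auto
qed

lemma comp_bij: assumes "f \<in> bij_X" "g \<in> bij_X" shows "f \<circ> g \<in> bij_X"
  using assms unfolding bij_X_def by (auto intro: bij_betw_trans)

lemma invX_PIs:
  assumes fb: "f \<in> bij_X" and fp: "PIs S f" and S: "S \<subseteq> {1,-1}"
  shows "PIs S (invX f)"
proof -
  obtain n a where a: "a 0 = 0" "a n = 1" "\<forall>i<n. a i < a (Suc i)"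
      "\<forall>i<n. \<exists>\<sigma>\<in>S. \<exists>c. \<forall>x\<in>{a i<..<a (Suc i)}. f x = \<sigma> * x + c"
    by (rule part_of_PIs[OF fp])
  have "\<forall>i. \<exists>p::real\<times>real. i < n \<longrightarrow> fst p \<in> S \<and> (\<forall>x\<in>{a i<..<a (Suc i)}. f x = fst p * x + snd p)"
  proof
    fix i show "\<exists>p::real\<times>real. i < n \<longrightarrow> fst p \<in> S \<and> (\<forall>x\<in>{a i<..<a (Suc i)}. f x = fst p * x + snd p)"
    proof (cases "i < n")
      case True
      then obtain \<sigma> c where "\<sigma> \<in> S" "\<forall>x\<in>{a i<..<a (Suc i)}. f x = \<sigma> * x + c" using a(4) by blast
      thus ?thesis by (intro exI[of _ "(\<sigma>, c)"]) simp
    qed simp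
  qed
  then obtain P where P: "\<And>i. i < n \<Longrightarrow> fst (P i) \<in> S \<and> (\<forall>x\<in>{a i<..<a (Suc i)}. f x = fst (P i) * x + snd (P i))"
    using choice by metis
  define sg where "sg i = fst (P i)" for i
  define cc where "cc i = snd (P i)" for i
  have sc: "\<And>i. i < n \<Longrightarrow> sg i \<in> S" "\<And>i x. i < n \<Longrightarrow> x \<in> {a i<..<a (Suc i)} \<Longrightarrow> f x = sg i * x + cc i"
    using P unfolding sg_def cc_def by auto
  define F where "F = (\<lambda>i. sg i * a i + cc i) ` {..<n} \<union> (\<lambda>i. sg i * a (Suc i) + cc i) ` {..<n} \<union> f ` a ` {..n}"
  have finF: "finite F" unfolding F_def by auto
  show ?thesis unfolding PIs_def
  proof (intro exI[of _ F] conjI allI impI)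
    fix u v :: real
    assume uv: "0 \<le> u" "u < v" "v \<le> 1" "F \<inter> {u<..<v} = {}"
    define y0 where "y0 = (u + v) / 2"
    have y0: "y0 \<in> {u<..<v}" "y0 \<in> IET_X" unfolding y0_def X_iff using uv by auto
    obtain x0 where x0: "x0 \<in> IET_X" "f x0 = y0" using bijX_D(4)[OF fb] y0(2) by (metis imageE)
    have "x0 \<notin> a ` {..n}"
    proof
      assume "x0 \<in> a ` {..n}"
      hence "y0 \<in> F" unfolding F_def using x0 by auto
      thus False using uv(4) y0(1) by blast
    qed
    obtain i where i: "i < n" "a i \<le> x0" "x0 < a (Suc i)"
      using piece_find[OF a(1,2), of x0] x0(1) unfolding X_iff by auto
    have "a i \<noteq> x0" using \<open>x0 \<notin> a ` {..n}\<close> i(1) by auto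
    hence x0i: "x0 \<in> {a i<..<a (Suc i)}" using i by auto
    have bnd: "0 \<le> a i" "a (Suc i) \<le> 1" using part_bounds[OF a(1-3), of i] part_bounds[OF a(1-3), of "Suc i"] i(1) by auto
    have e1: "sg i * a i + cc i \<in> F" "sg i * a (Suc i) + cc i \<in> F" unfolding F_def using i(1) by auto
    hence e2: "sg i * a i + cc i \<notin> {u<..<v}" "sg i * a (Suc i) + cc i \<notin> {u<..<v}" using uv(4) by blast+
    have fx0: "y0 = sg i * x0 + cc i" using sc(2)[OF i(1) x0i] x0(2) by simp
    have inv_eq: "invX f y = x" if "x \<in> {a i<..<a (Suc i)}" "f x = y" for x y
    proof -
      have "invX f (f x) = x" by (rule invX_f[OF fb])
      thus ?thesis using that by simp
    qed
    have "sg i \<in> {1,-1}" using sc(1)[OF i(1)] S by auto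
    thus "\<exists>\<sigma>\<in>S. \<exists>c. \<forall>x\<in>{u<..<v}. invX f x = \<sigma> * x + c"
    proof
      assume s1: "sg i = 1"
      have lo: "a i + cc i \<le> u" using e2(1) fx0 x0i y0(1) s1 by auto
      have hi: "a (Suc i) + cc i \<ge> v" using e2(2) fx0 x0i y0(1) s1 by auto
      have "\<forall>y\<in>{u<..<v}. invX f y = 1 * y + (- cc i)"
      proof
        fix y assume y: "y \<in> {u<..<v}"
        have xi: "y - cc i \<in> {a i<..<a (Suc i)}" using y lo hi by auto
        have "f (y - cc i) = y" using sc(2)[OF i(1) xi] s1 by simp
        thus "invX f y = 1 * y + (- cc i)" using inv_eq[OF xi] by simp
      qed
      thus ?thesis using sc(1)[OF i(1)] s1 by (intro bexI[of _ 1]) auto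
    next
      assume "sg i \<in> {-1}"
      hence s1: "sg i = -1" by simp
      have lo: "- a (Suc i) + cc i \<le> u" using e2(2) fx0 x0i y0(1) s1 by auto
      have hi: "- a i + cc i \<ge> v" using e2(1) fx0 x0i y0(1) s1 by auto
      have "\<forall>y\<in>{u<..<v}. invX f y = -1 * y + cc i"
      proof
        fix y assume y: "y \<in> {u<..<v}"
        have xi: "cc i - y \<in> {a i<..<a (Suc i)}" using y lo hi by auto
        have "f (cc i - y) = y" using sc(2)[OF i(1) xi] s1 by simp
        thus "invX f y = -1 * y + cc i" using inv_eq[OF xi] by simp
      qed
      thus ?thesis using sc(1)[OF i(1)] s1 by (intro bexI[of _ "-1"]) auto
    qed
  qed (rule finF)
qed

lemma carrier_G: "carrier IET_hat_bowtie = {f \<in> bij_X. PIs {1,-1} f}"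
  unfolding IET_hat_bowtie_def by (simp add: pw_True)

lemma mult_G [simp]: "f \<otimes>\<^bsub>IET_hat_bowtie\<^esub> g = f \<circ> g"
  unfolding IET_hat_bowtie_def by simp

lemma one_G [simp]: "\<one>\<^bsub>IET_hat_bowtie\<^esub> = id"
  unfolding IET_hat_bowtie_def by simp

lemma P_eq: "IET_hat_plus = {f \<in> bij_X. PIs {1} f}"
  unfolding IET_hat_plus_def by (simp add: pw_False)

lemma id_bij: "id \<in> bij_X" unfolding bij_X_def by auto

lemma PIs_id: "PIs {1} id"
  unfolding PIs_def by (intro exI[of _ "{}"]) auto

lemma PIs_comp_bij:
  assumes "PIs S1 f" "PIs S2 g" "S2 \<subseteq> {1,-1}" "g \<in> bij_X"
    "\<And>s1 s2. s1 \<in> S1 \<Longrightarrow> s2 \<in> S2 \<Longrightarrow> s1 * s2 \<in> T"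
  shows "PIs T (f \<circ> g)"
  using PIs_comp[OF assms(1-3) bijX_D(3)[OF assms(4)] _ assms(5)] bijX_D(4)[OF assms(4)] by auto

lemma group_G: "group IET_hat_bowtie"
proof (rule groupI)
  fix x y assume "x \<in> carrier IET_hat_bowtie" "y \<in> carrier IET_hat_bowtie"
  hence xy: "x \<in> bij_X" "PIs {1,-1} x" "y \<in> bij_X" "PIs {1,-1} y" unfolding carrier_G by auto
  have "PIs {1,-1} (x \<circ> y)" by (rule PIs_comp_bij[OF xy(2,4) _ xy(3)]) auto
  thus "x \<otimes>\<^bsub>IET_hat_bowtie\<^esub> y \<in> carrier IET_hat_bowtie"
    unfolding carrier_G using comp_bij[OF xy(1,3)] by auto
next
  show "\<one>\<^bsub>IET_hat_bowtie\<^esub> \<in> carrier IET_hat_bowtie"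
    unfolding carrier_G using id_bij PIs_mono[OF _ PIs_id, of "{1,-1}"] by auto
next
  fix x y z show "x \<otimes>\<^bsub>IET_hat_bowtie\<^esub> y \<otimes>\<^bsub>IET_hat_bowtie\<^esub> z = x \<otimes>\<^bsub>IET_hat_bowtie\<^esub> (y \<otimes>\<^bsub>IET_hat_bowtie\<^esub> z)"
    by (simp add: o_assoc)
next
  fix x show "\<one>\<^bsub>IET_hat_bowtie\<^esub> \<otimes>\<^bsub>IET_hat_bowtie\<^esub> x = x" by simp
next
  fix x assume x: "x \<in> carrier IET_hat_bowtie"
  hence xb: "x \<in> bij_X" and xp: "PIs {1,-1} x" unfolding carrier_G by auto
  have "invX x \<in> carrier IET_hat_bowtie"
    unfolding carrier_G using invX_bij[OF xb] invX_PIs[OF xb xp] by auto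
  moreover have "invX x \<otimes>\<^bsub>IET_hat_bowtie\<^esub> x = \<one>\<^bsub>IET_hat_bowtie\<^esub>"
    using invX_f[OF xb] by (auto simp: fun_eq_iff)
  ultimately show "\<exists>y\<in>carrier IET_hat_bowtie. y \<otimes>\<^bsub>IET_hat_bowtie\<^esub> x = \<one>\<^bsub>IET_hat_bowtie\<^esub>" by blast
qed

lemma inv_G: assumes "f \<in> carrier IET_hat_bowtie" shows "inv\<^bsub>IET_hat_bowtie\<^esub> f = invX f"
proof -
  have fb: "f \<in> bij_X" and fp: "PIs {1,-1} f" using assms unfolding carrier_G by auto
  have "invX f \<in> carrier IET_hat_bowtie"
    unfolding carrier_G using invX_bij[OF fb] invX_PIs[OF fb fp] by auto
  moreover have "invX f \<otimes>\<^bsub>IET_hat_bowtie\<^esub> f = \<one>\<^bsub>IET_hat_bowtie\<^esub>"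
    using invX_f[OF fb] by (auto simp: fun_eq_iff)
  ultimately show ?thesis using group.inv_equality[OF group_G] assms by blast
qed

lemma subgroup_P: "subgroup IET_hat_plus IET_hat_bowtie"
proof (rule group.subgroupI[OF group_G])
  show "IET_hat_plus \<subseteq> carrier IET_hat_bowtie"
    unfolding P_eq carrier_G using PIs_mono[of "{1}" "{1,-1}"] by auto
  show "IET_hat_plus \<noteq> {}" unfolding P_eq using id_bij PIs_id by auto
next
  fix a assume a: "a \<in> IET_hat_plus"
  hence ab: "a \<in> bij_X" and ap: "PIs {1} a" unfolding P_eq by auto
  have "a \<in> carrier IET_hat_bowtie" unfolding carrier_G using ab PIs_mono[OF _ ap, of "{1,-1}"] by auto
  thus "inv\<^bsub>IET_hat_bowtie\<^esub> a \<in> IET_hat_plus"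
    unfolding inv_G[OF \<open>a \<in> carrier IET_hat_bowtie\<close>] P_eq using invX_bij[OF ab] invX_PIs[OF ab ap] by auto
next
  fix a b assume "a \<in> IET_hat_plus" "b \<in> IET_hat_plus"
  hence ab: "a \<in> bij_X" "PIs {1} a" "b \<in> bij_X" "PIs {1} b" unfolding P_eq by auto
  have "PIs {1} (a \<circ> b)" by (rule PIs_comp_bij[OF ab(2,4) _ ab(3)]) auto
  thus "a \<otimes>\<^bsub>IET_hat_bowtie\<^esub> b \<in> IET_hat_plus"
    unfolding P_eq using comp_bij[OF ab(1,3)] by auto
qed

definition supp :: "(real \<Rightarrow> real) \<Rightarrow> real set" where "supp f = {x. f x \<noteq> x}"

lemma PIs_fin: assumes "finite (supp f)" shows "PIs {1} f"
  unfolding PIs_def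
proof (intro exI[of _ "supp f"] conjI allI impI)
  fix u v :: real assume "supp f \<inter> {u<..<v} = {}"
  hence "\<forall>x\<in>{u<..<v}. f x = 1 * x + 0" unfolding supp_def by auto
  thus "\<exists>\<sigma>\<in>{1}. \<exists>c. \<forall>x\<in>{u<..<v}. f x = \<sigma> * x + c" by blast
qed (rule assms)

lemma N_eq: "S_fin = {f \<in> bij_X. finite (supp f)}" unfolding S_fin_def supp_def by simp

lemma normal_N: "S_fin \<lhd> IET_hat_bowtie"
proof -
  have NG: "S_fin \<subseteq> carrier IET_hat_bowtie"
    unfolding N_eq carrier_G using PIs_mono[OF _ PIs_fin, of "{1,-1}"] by auto
  have sg: "subgroup S_fin IET_hat_bowtie"
  proof (rule group.subgroupI[OF group_G])
    show "S_fin \<subseteq> carrier IET_hat_bowtie" by (rule NG)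
    have "supp id = {}" unfolding supp_def by auto
    thus "S_fin \<noteq> {}" unfolding N_eq using id_bij by auto
  next
    fix a assume a: "a \<in> S_fin"
    hence ab: "a \<in> bij_X" and af: "finite (supp a)" unfolding N_eq by auto
    have "supp (invX a) \<subseteq> a ` supp a"
    proof
      fix y assume "y \<in> supp (invX a)"
      hence "invX a y \<noteq> y" unfolding supp_def by auto
      hence "a (invX a y) \<noteq> invX a y" using f_invX[OF ab, of y] by auto
      hence "invX a y \<in> supp a" unfolding supp_def by auto
      thus "y \<in> a ` supp a" using f_invX[OF ab, of y] by force
    qed
    hence "finite (supp (invX a))" using af finite_surj by blast
    thus "inv\<^bsub>IET_hat_bowtie\<^esub> a \<in> S_fin"
      using inv_G[of a] a NG invX_bij[OF ab] unfolding N_eq by auto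
  next
    fix a b assume "a \<in> S_fin" "b \<in> S_fin"
    moreover have "supp (a \<circ> b) \<subseteq> supp a \<union> supp b" unfolding supp_def by auto
    ultimately show "a \<otimes>\<^bsub>IET_hat_bowtie\<^esub> b \<in> S_fin"
      unfolding N_eq using comp_bij finite_subset by (auto intro: finite_subset)
  qed
  show ?thesis
    unfolding group.normal_inv_iff[OF group_G]
  proof (intro conjI ballI sg)
    fix x h assume x: "x \<in> carrier IET_hat_bowtie" and h: "h \<in> S_fin"
    have xb: "x \<in> bij_X" using x unfolding carrier_G by auto
    have hb: "h \<in> bij_X" and hf: "finite (supp h)" using h unfolding N_eq by auto
    have "supp (x \<circ> h \<circ> invX x) \<subseteq> x ` supp h"
    proof
      fix y assume "y \<in> supp (x \<circ> h \<circ> invX x)"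
      hence ne: "x (h (invX x y)) \<noteq> y" unfolding supp_def by auto
      have "h (invX x y) \<noteq> invX x y"
      proof
        assume "h (invX x y) = invX x y"
        thus False using ne f_invX[OF xb, of y] by simp
      qed
      hence "invX x y \<in> supp h" unfolding supp_def by auto
      thus "y \<in> x ` supp h" using f_invX[OF xb, of y] by force
    qed
    hence "finite (supp (x \<circ> h \<circ> invX x))" using hf finite_surj by blast
    moreover have "x \<circ> h \<circ> invX x \<in> bij_X" using comp_bij[OF comp_bij[OF xb hb] invX_bij[OF xb]] .
    ultimately show "x \<otimes>\<^bsub>IET_hat_bowtie\<^esub> h \<otimes>\<^bsub>IET_hat_bowtie\<^esub> inv\<^bsub>IET_hat_bowtie\<^esub> x \<in> S_fin"
      unfolding N_eq inv_G[OF x] by simp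
  qed
qed

lemma rho_invol: "rho_X (rho_X x) = x" unfolding rho_X_def by auto

lemma rho_bij: "rho_X \<in> bij_X"
proof -
  have "bij_betw rho_X IET_X IET_X"
    by (rule bij_betw_byWitness[of _ rho_X]) (auto simp: rho_invol rho_X_def IET_X_def)
  moreover have "\<forall>x. x \<notin> IET_X \<longrightarrow> rho_X x = x" unfolding rho_X_def IET_X_def by auto
  ultimately show ?thesis unfolding bij_X_def by auto
qed

lemma rho_PIs: "PIs {-1} rho_X"
  unfolding PIs_def
proof (intro exI[of _ "{}"] conjI allI impI)
  fix u v :: real assume "0 \<le> u" "u < v" "v \<le> 1"
  hence "\<forall>x\<in>{u<..<v}. rho_X x = -1 * x + 1" unfolding rho_X_def by auto
  thus "\<exists>\<sigma>\<in>{-1}. \<exists>c. \<forall>x\<in>{u<..<v}. rho_X x = \<sigma> * x + c" by blast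
qed simp

lemma rho_G: "rho_X \<in> carrier IET_hat_bowtie"
  unfolding carrier_G using rho_bij PIs_mono[OF _ rho_PIs, of "{1,-1}"] by auto

lemma rho_sq: "rho_X \<circ> rho_X = id" by (auto simp: fun_eq_iff rho_invol)

lemma rho_conj: assumes "p \<in> IET_hat_plus" shows "rho_X \<circ> p \<circ> rho_X \<in> IET_hat_plus"
proof -
  have pb: "p \<in> bij_X" and pp: "PIs {1} p" using assms unfolding P_eq by auto
  have "PIs {-1} (rho_X \<circ> p)" by (rule PIs_comp_bij[OF rho_PIs pp _ pb]) auto
  hence "PIs {1} (rho_X \<circ> p \<circ> rho_X)" by (rule PIs_comp_bij[OF _ rho_PIs _ rho_bij]) auto
  thus ?thesis unfolding P_eq using comp_bij[OF comp_bij[OF rho_bij pb] rho_bij] by auto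
qed

lemma abstract_normalizer:
  fixes G (structure)
  assumes grp: "group G" and nN: "N \<lhd> G" and sP: "subgroup P G"
    and r: "r \<in> carrier G" "r \<otimes> r = \<one>" and rP: "\<And>p. p \<in> P \<Longrightarrow> r \<otimes> p \<otimes> r \<in> P"
    and key: "\<And>f. f \<in> carrier G \<Longrightarrow> f \<notin> P \<Longrightarrow> r \<otimes> f \<notin> P \<Longrightarrow> (\<exists>p\<in>P. \<forall>q\<in>P. inv f \<otimes> p \<otimes> f \<otimes> inv q \<notin> N)"
  shows "normalizer (G Mod N) ((\<lambda>f. N #> f) ` P) =
     (\<lambda>f. N #> f) ` P \<union> (\<lambda>k. (N #> r) \<otimes>\<^bsub>G Mod N\<^esub> k) ` ((\<lambda>f. N #> f) ` P)"
proof -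
  interpret G: group G by (rule grp)
  interpret N: normal N G by (rule nN)
  interpret P: subgroup P G by (rule sP)
  define H where "H = (\<lambda>f. N #> f) ` P"
  have Nsub: "N \<subseteq> carrier G" by (rule N.subset)
  have cQ: "carrier (G Mod N) = rcosets N" by (simp add: FactGroup_def)
  have HQ: "H \<subseteq> carrier (G Mod N)" unfolding H_def cQ using G.rcosetsI[OF Nsub] P.subset by auto
  have mulQ: "\<And>f g. f \<in> carrier G \<Longrightarrow> g \<in> carrier G \<Longrightarrow> (N #> f) \<otimes>\<^bsub>G Mod N\<^esub> (N #> g) = N #> (f \<otimes> g)"
    using N.rcos_sum by simp
  have invQ: "\<And>f. f \<in> carrier G \<Longrightarrow> inv\<^bsub>G Mod N\<^esub> (N #> f) = N #> inv f"
  proof -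
    fix f assume f: "f \<in> carrier G"
    have "N #> f \<in> carrier (G Mod N)" unfolding cQ using G.rcosetsI[OF Nsub f] .
    thus "inv\<^bsub>G Mod N\<^esub> (N #> f) = N #> inv f" using N.inv_FactGroup N.rcos_inv[OF f] by simp
  qed
  have eqN: "\<And>f g. f \<in> carrier G \<Longrightarrow> g \<in> carrier G \<Longrightarrow> N #> f = N #> g \<Longrightarrow> f \<otimes> inv g \<in> N"
  proof -
    fix f g assume f: "f \<in> carrier G" and g: "g \<in> carrier G" and e: "N #> f = N #> g"
    have "f \<in> N #> g" using e G.rcos_self[OF f N.subgroup_axioms] by simp
    thus "f \<otimes> inv g \<in> N" using N.rcos_module_imp[OF grp g] by simp
  qed
  have lr: "\<And>A B S. A <#\<^bsub>G Mod N\<^esub> S #>\<^bsub>G Mod N\<^esub> B = (\<lambda>s. A \<otimes>\<^bsub>G Mod N\<^esub> s \<otimes>\<^bsub>G Mod N\<^esub> B) ` S"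
    unfolding l_coset_def r_coset_def by auto
  have conj: "\<And>f. f \<in> carrier G \<Longrightarrow>
      (N #> f) <#\<^bsub>G Mod N\<^esub> H #>\<^bsub>G Mod N\<^esub> inv\<^bsub>G Mod N\<^esub> (N #> f) = (\<lambda>p. N #> (f \<otimes> p \<otimes> inv f)) ` P"
  proof -
    fix f assume f: "f \<in> carrier G"
    have "(N #> f) <#\<^bsub>G Mod N\<^esub> H #>\<^bsub>G Mod N\<^esub> inv\<^bsub>G Mod N\<^esub> (N #> f) =
          (\<lambda>p. (N #> f) \<otimes>\<^bsub>G Mod N\<^esub> (N #> p) \<otimes>\<^bsub>G Mod N\<^esub> (N #> inv f)) ` P"
      unfolding lr H_def invQ[OF f] by (simp add: image_image)
    also have "\<dots> = (\<lambda>p. N #> (f \<otimes> p \<otimes> inv f)) ` P"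
      using mulQ f P.subset by (intro image_cong refl) (auto)
    finally show "?thesis f" .
  qed
  have conjH: "\<And>f. f \<in> carrier G \<Longrightarrow> (\<forall>p\<in>P. f \<otimes> p \<otimes> inv f \<in> P) \<Longrightarrow> (\<forall>p\<in>P. inv f \<otimes> p \<otimes> f \<in> P) \<Longrightarrow>
      (\<lambda>p. N #> (f \<otimes> p \<otimes> inv f)) ` P = H"
  proof -
    fix f assume f: "f \<in> carrier G" and c1: "\<forall>p\<in>P. f \<otimes> p \<otimes> inv f \<in> P" and c2: "\<forall>p\<in>P. inv f \<otimes> p \<otimes> f \<in> P"
    show "(\<lambda>p. N #> (f \<otimes> p \<otimes> inv f)) ` P = H"
    proof
      show "(\<lambda>p. N #> (f \<otimes> p \<otimes> inv f)) ` P \<subseteq> H" unfolding H_def using c1 by auto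
    next
      show "H \<subseteq> (\<lambda>p. N #> (f \<otimes> p \<otimes> inv f)) ` P"
      proof
        fix X assume "X \<in> H"
        then obtain q where q: "q \<in> P" "X = N #> q" unfolding H_def by auto
        have qc: "q \<in> carrier G" using q(1) P.subset by auto
        have "f \<otimes> (inv f \<otimes> q \<otimes> f) \<otimes> inv f = q"
          using f qc by (simp add: G.m_assoc[symmetric]) (simp add: G.m_assoc)
        hence "X = N #> (f \<otimes> (inv f \<otimes> q \<otimes> f) \<otimes> inv f)" using q by simp
        thus "X \<in> (\<lambda>p. N #> (f \<otimes> p \<otimes> inv f)) ` P" using c2 q(1) by blast
      qed
    qed
  qed
  have norm_iff: "\<And>X. X \<in> normalizer (G Mod N) H \<longleftrightarrow> X \<in> carrier (G Mod N) \<and>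
        X <#\<^bsub>G Mod N\<^esub> H #>\<^bsub>G Mod N\<^esub> inv\<^bsub>G Mod N\<^esub> X = H"
    unfolding normalizer_def stabilizer_def using HQ by auto
  have carrQ: "\<And>X. X \<in> carrier (G Mod N) \<longleftrightarrow> (\<exists>f\<in>carrier G. X = N #> f)"
    unfolding cQ RCOSETS_def by auto
  have invr: "inv r = r" using G.inv_equality[OF r(2) r(1) r(1)] .
  have Minus: "(\<lambda>k. (N #> r) \<otimes>\<^bsub>G Mod N\<^esub> k) ` H = (\<lambda>k. N #> (r \<otimes> k)) ` P"
    unfolding H_def image_image using mulQ r(1) P.subset by (intro image_cong refl) auto
  show ?thesis
    unfolding H_def[symmetric] Minus
  proof
    show "H \<union> (\<lambda>k. N #> (r \<otimes> k)) ` P \<subseteq> normalizer (G Mod N) H"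
    proof
      fix X assume "X \<in> H \<union> (\<lambda>k. N #> (r \<otimes> k)) ` P"
      then obtain f where f: "f \<in> carrier G" "X = N #> f" "\<forall>p\<in>P. f \<otimes> p \<otimes> inv f \<in> P" "\<forall>p\<in>P. inv f \<otimes> p \<otimes> f \<in> P"
      proof
        assume "X \<in> H"
        then obtain k where k: "k \<in> P" "X = N #> k" unfolding H_def by auto
        show thesis
        proof (rule that[of k])
          show "k \<in> carrier G" using k P.subset by auto
          show "X = N #> k" by (rule k(2))
          show "\<forall>p\<in>P. k \<otimes> p \<otimes> inv k \<in> P" using k(1) by (auto intro: P.m_closed P.m_inv_closed)
          show "\<forall>p\<in>P. inv k \<otimes> p \<otimes> k \<in> P" using k(1) by (auto intro: P.m_closed P.m_inv_closed)
        qed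
      next
        assume "X \<in> (\<lambda>k. N #> (r \<otimes> k)) ` P"
        then obtain k where k: "k \<in> P" "X = N #> (r \<otimes> k)" by auto
        have kc: "k \<in> carrier G" using k P.subset by auto
        show thesis
        proof (rule that[of "r \<otimes> k"])
          show "r \<otimes> k \<in> carrier G" using kc r by auto
          show "X = N #> (r \<otimes> k)" by (rule k(2))
          show "\<forall>p\<in>P. r \<otimes> k \<otimes> p \<otimes> inv (r \<otimes> k) \<in> P"
          proof
            fix p assume p: "p \<in> P"
            have pc: "p \<in> carrier G" using p P.subset by auto
            have "r \<otimes> k \<otimes> p \<otimes> inv (r \<otimes> k) = r \<otimes> (k \<otimes> p \<otimes> inv k) \<otimes> r"
              using kc pc r by (simp add: G.inv_mult_group invr G.m_assoc)
            moreover have "k \<otimes> p \<otimes> inv k \<in> P" using k(1) p by (auto intro: P.m_closed P.m_inv_closed)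
            ultimately show "r \<otimes> k \<otimes> p \<otimes> inv (r \<otimes> k) \<in> P" using rP by simp
          qed
          show "\<forall>p\<in>P. inv (r \<otimes> k) \<otimes> p \<otimes> (r \<otimes> k) \<in> P"
          proof
            fix p assume p: "p \<in> P"
            have pc: "p \<in> carrier G" using p P.subset by auto
            have "inv (r \<otimes> k) \<otimes> p \<otimes> (r \<otimes> k) = inv k \<otimes> (r \<otimes> p \<otimes> r) \<otimes> k"
              using kc pc r by (simp add: G.inv_mult_group invr G.m_assoc)
            moreover have "r \<otimes> p \<otimes> r \<in> P" using rP p by simp
            ultimately show "inv (r \<otimes> k) \<otimes> p \<otimes> (r \<otimes> k) \<in> P" using k(1) by (auto intro: P.m_closed P.m_inv_closed)
          qed
        qed
      qed
      show "X \<in> normalizer (G Mod N) H"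
        unfolding norm_iff using f conj[OF f(1)] conjH[OF f(1) f(3) f(4)] carrQ by auto
    qed
  next
    show "normalizer (G Mod N) H \<subseteq> H \<union> (\<lambda>k. N #> (r \<otimes> k)) ` P"
    proof
      fix X assume X: "X \<in> normalizer (G Mod N) H"
      then obtain f where f: "f \<in> carrier G" "X = N #> f" unfolding norm_iff carrQ by auto
      have im: "(\<lambda>p. N #> (f \<otimes> p \<otimes> inv f)) ` P = H" using X unfolding norm_iff f(2) conj[OF f(1)] by auto
      have "f \<in> P \<or> r \<otimes> f \<in> P"
      proof (rule ccontr)
        assume "\<not> (f \<in> P \<or> r \<otimes> f \<in> P)"
        then obtain p where p: "p \<in> P" "\<forall>q\<in>P. inv f \<otimes> p \<otimes> f \<otimes> inv q \<notin> N" using key[OF f(1)] by auto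
        have pc: "p \<in> carrier G" using p P.subset by auto
        have "N #> p \<in> H" unfolding H_def using p by auto
        then obtain p' where p': "p' \<in> P" "N #> p = N #> (f \<otimes> p' \<otimes> inv f)" using im by auto
        have pc': "p' \<in> carrier G" using p' P.subset by auto
        have "p \<otimes> inv (f \<otimes> p' \<otimes> inv f) \<in> N" using eqN[OF pc _ p'(2)] f(1) pc' by auto
        hence "inv f \<otimes> (p \<otimes> inv (f \<otimes> p' \<otimes> inv f)) \<otimes> f \<in> N" using N.inv_op_closed1 f(1) by auto
        moreover have "inv f \<otimes> (p \<otimes> inv (f \<otimes> p' \<otimes> inv f)) \<otimes> f = inv f \<otimes> p \<otimes> f \<otimes> inv p'"
          using f(1) pc pc' by (simp add: G.inv_mult_group G.m_assoc)
        ultimately show False using p(2) p'(1) by auto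
      qed
      thus "X \<in> H \<union> (\<lambda>k. N #> (r \<otimes> k)) ` P"
      proof
        assume "f \<in> P" thus ?thesis unfolding H_def using f(2) by auto
      next
        assume rf: "r \<otimes> f \<in> P"
        have "r \<otimes> (r \<otimes> f) = f" using r f(1) by (simp add: G.m_assoc[symmetric])
        hence "X = N #> (r \<otimes> (r \<otimes> f))" using f(2) by simp
        thus ?thesis using rf by blast
      qed
    qed
  qed
qed

lemma subint:
  fixes \<alpha> \<beta> :: real
  assumes "finite D" "\<alpha> < \<beta>"
  obtains u v where "\<alpha> \<le> u" "u < v" "v \<le> \<beta>" "D \<inter> {u<..<v} = {}"
proof -
  define E where "E = insert \<beta> {d \<in> D. \<alpha> < d \<and> d < \<beta>}"
  have fin: "finite E" unfolding E_def using assms(1) by auto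
  define m where "m = Min E"
  have mE: "m \<in> E" unfolding m_def using Min_in[OF fin] unfolding E_def by blast
  have "\<alpha> < m" using mE assms(2) unfolding E_def by auto
  have "m \<le> \<beta>" unfolding m_def using fin E_def by simp
  have "D \<inter> {\<alpha><..<m} = {}"
  proof (rule ccontr)
    assume "D \<inter> {\<alpha><..<m} \<noteq> {}"
    then obtain d where d: "d \<in> D" "\<alpha> < d" "d < m" by auto
    hence "d \<in> E" unfolding E_def using \<open>m \<le> \<beta>\<close> by auto
    hence "m \<le> d" unfolding m_def using fin by simp
    thus False using d by simp
  qed
  thus ?thesis using that[of \<alpha> m] \<open>\<alpha> < m\<close> \<open>m \<le> \<beta>\<close> by auto
qed

lemma key_concrete:
  assumes fG: "f \<in> carrier IET_hat_bowtie" and fP: "f \<notin> IET_hat_plus" and rfP: "rho_X \<circ> f \<notin> IET_hat_plus"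
  shows "\<exists>p\<in>IET_hat_plus. \<forall>q\<in>IET_hat_plus. invX f \<circ> p \<circ> f \<circ> invX q \<notin> S_fin"
proof -
  have fb: "f \<in> bij_X" and fp: "PIs {1,-1} f" using fG unfolding carrier_G by auto
  have not1: "\<not> PIs {1} f" using fP fb unfolding P_eq by auto
  have notm1: "\<not> PIs {-1} f"
  proof
    assume "PIs {-1} f"
    hence "PIs {1} (rho_X \<circ> f)" by (rule PIs_comp_bij[OF rho_PIs _ _ fb]) auto
    thus False using rfP comp_bij[OF rho_bij fb] unfolding P_eq by auto
  qed
  obtain F where F: "finite F" "\<And>u v. 0 \<le> u \<Longrightarrow> u < v \<Longrightarrow> v \<le> 1 \<Longrightarrow> F \<inter> {u<..<v} = {} \<Longrightarrow>
      (\<exists>\<sigma>\<in>{1,-1}. \<exists>c. \<forall>x\<in>{u<..<v}. f x = \<sigma> * x + c)"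
    using fp unfolding PIs_def by blast
  have "\<exists>u1 v1 c1. 0 \<le> u1 \<and> u1 < v1 \<and> v1 \<le> 1 \<and> (\<forall>x\<in>{u1<..<v1}. f x = - x + c1)"
  proof (rule ccontr)
    assume nf: "\<not> (\<exists>u1 v1 c1. 0 \<le> u1 \<and> u1 < v1 \<and> v1 \<le> 1 \<and> (\<forall>x\<in>{u1<..<v1}. f x = - x + c1))"
    have "PIs {1} f" unfolding PIs_def
    proof (intro exI[of _ F] conjI allI impI)
      fix u v :: real assume uv: "0 \<le> u" "u < v" "v \<le> 1" "F \<inter> {u<..<v} = {}"
      obtain \<sigma> c where sc: "\<sigma> \<in> {1,-1}" "\<forall>x\<in>{u<..<v}. f x = \<sigma> * x + c" using F(2)[OF uv] by blast
      have "\<sigma> \<noteq> -1"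
      proof
        assume "\<sigma> = -1"
        hence "\<forall>x\<in>{u<..<v}. f x = - x + c" using sc(2) by simp
        thus False using nf uv by blast
      qed
      hence "\<sigma> = 1" using sc(1) by simp
      thus "\<exists>\<sigma>\<in>{1}. \<exists>c. \<forall>x\<in>{u<..<v}. f x = \<sigma> * x + c" using sc(2) by blast
    qed (rule F(1))
    thus False using not1 by simp
  qed
  then obtain u1 v1 c1 where I1: "0 \<le> u1" "u1 < v1" "v1 \<le> 1" "\<forall>x\<in>{u1<..<v1}. f x = - x + c1" by blast
  have "\<exists>u2 v2 c2. 0 \<le> u2 \<and> u2 < v2 \<and> v2 \<le> 1 \<and> (\<forall>x\<in>{u2<..<v2}. f x = x + c2)"
  proof (rule ccontr)
    assume nf: "\<not> (\<exists>u2 v2 c2. 0 \<le> u2 \<and> u2 < v2 \<and> v2 \<le> 1 \<and> (\<forall>x\<in>{u2<..<v2}. f x = x + c2))"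
    have "PIs {-1} f" unfolding PIs_def
    proof (intro exI[of _ F] conjI allI impI)
      fix u v :: real assume uv: "0 \<le> u" "u < v" "v \<le> 1" "F \<inter> {u<..<v} = {}"
      obtain \<sigma> c where sc: "\<sigma> \<in> {1,-1}" "\<forall>x\<in>{u<..<v}. f x = \<sigma> * x + c" using F(2)[OF uv] by blast
      have "\<sigma> \<noteq> 1"
      proof
        assume "\<sigma> = 1"
        hence "\<forall>x\<in>{u<..<v}. f x = x + c" using sc(2) by simp
        thus False using nf uv by blast
      qed
      hence "\<sigma> = -1" using sc(1) by simp
      thus "\<exists>\<sigma>\<in>{-1}. \<exists>c. \<forall>x\<in>{u<..<v}. f x = \<sigma> * x + c" using sc(2) by blast
    qed (rule F(1))
    thus False using notm1 by simp
  qed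
  then obtain u2 v2 c2 where I2: "0 \<le> u2" "u2 < v2" "v2 \<le> 1" "\<forall>x\<in>{u2<..<v2}. f x = x + c2" by blast
  have injf: "inj f" by (rule bijX_inj[OF fb])
  have J1X: "y \<in> IET_X" if "c1 - v1 < y" "y < c1 - u1" for y
  proof -
    have x: "c1 - y \<in> {u1<..<v1}" using that by auto
    have "c1 - y \<in> IET_X" using x I1 unfolding X_iff by auto
    hence "f (c1 - y) \<in> IET_X" using bijX_D(4)[OF fb] by blast
    thus ?thesis using I1(4) x by simp
  qed
  have J2X: "y \<in> IET_X" if "u2 + c2 < y" "y < v2 + c2" for y
  proof -
    have x: "y - c2 \<in> {u2<..<v2}" using that by auto
    have "y - c2 \<in> IET_X" using x I2 unfolding X_iff by auto
    hence "f (y - c2) \<in> IET_X" using bijX_D(4)[OF fb] by blast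
    thus ?thesis using I2(4) x by simp
  qed
  have both: "2 * y = c1 + c2" if "c1 - v1 < y" "y < c1 - u1" "u2 + c2 < y" "y < v2 + c2" for y
  proof -
    have "f (c1 - y) = y" using I1(4) that by auto
    moreover have "f (y - c2) = y" using I2(4) that by auto
    ultimately have "c1 - y = y - c2" using injf by (metis injD)
    thus ?thesis by simp
  qed
  have disj: "\<not> (c1 - v1 < y \<and> y < c1 - u1 \<and> u2 + c2 < y \<and> y < v2 + c2)" for y
  proof
    assume y: "c1 - v1 < y \<and> y < c1 - u1 \<and> u2 + c2 < y \<and> y < v2 + c2"
    define lo where "lo = max (c1 - v1) (u2 + c2)"
    define hi where "hi = min (c1 - u1) (v2 + c2)"
    have "lo < hi" using y unfolding lo_def hi_def by auto
    have lh: "c1 - v1 \<le> lo" "u2 + c2 \<le> lo" "hi \<le> c1 - u1" "hi \<le> v2 + c2" unfolding lo_def hi_def by auto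
    have "2 * ((2*lo+hi)/3) = c1 + c2" using \<open>lo < hi\<close> lh by (intro both; simp add: field_simps)
    moreover have "2 * ((lo+2*hi)/3) = c1 + c2" using \<open>lo < hi\<close> lh by (intro both; simp add: field_simps)
    ultimately show False using \<open>lo < hi\<close> by simp
  qed
  define \<epsilon> where "\<epsilon> = min (v1 - u1) (v2 - u2) / 2"
  have \<epsilon>: "0 < \<epsilon>" "2 * \<epsilon> \<le> v1 - u1" "2 * \<epsilon> \<le> v2 - u2" unfolding \<epsilon>_def using I1 I2 by auto
  define s where "s = c1 - v1 + \<epsilon> / 2"
  define t where "t = u2 + c2 + \<epsilon> / 2"
  have sJ: "c1 - v1 < y \<and> y < c1 - u1" if "s \<le> y" "y \<le> s + \<epsilon>" for y
    using that \<epsilon> unfolding s_def by auto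
  have tJ: "u2 + c2 < y \<and> y < v2 + c2" if "t \<le> y" "y \<le> t + \<epsilon>" for y
    using that \<epsilon> unfolding t_def by auto
  have st: "\<not> (s \<le> y \<and> y \<le> s + \<epsilon> \<and> t \<le> y \<and> y \<le> t + \<epsilon>)" for y
    using sJ tJ disj by blast
  define h where "h y = (if s \<le> y \<and> y < s + \<epsilon> then y + (t - s) else if t \<le> y \<and> y < t + \<epsilon> then y - (t - s) else y)" for y
  have hh: "h (h y) = y" for y
  proof -
    consider "s \<le> y \<and> y < s + \<epsilon>" | "\<not> (s \<le> y \<and> y < s + \<epsilon>)" "t \<le> y \<and> y < t + \<epsilon>"
      | "\<not> (s \<le> y \<and> y < s + \<epsilon>)" "\<not> (t \<le> y \<and> y < t + \<epsilon>)" by blast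
    thus ?thesis
    proof cases
      case 1
      have "\<not> (s \<le> y + (t - s) \<and> y + (t - s) < s + \<epsilon>)" using st[of "y + (t - s)"] 1 by auto
      thus ?thesis using 1 unfolding h_def by auto
    next
      case 2
      have "\<not> (t \<le> y - (t - s) \<and> y - (t - s) < t + \<epsilon>)" using st[of "y - (t - s)"] 2 by auto
      thus ?thesis using 2 unfolding h_def by auto
    next
      case 3 hence "h y = y" unfolding h_def by auto
      thus ?thesis by simp
    qed
  qed
  have sX: "y \<in> IET_X" if "s \<le> y" "y \<le> s + \<epsilon>" for y using sJ[OF that] J1X by blast
  have tX: "y \<in> IET_X" if "t \<le> y" "y \<le> t + \<epsilon>" for y using tJ[OF that] J2X by blast
  have hout: "h y = y" if "y \<notin> IET_X" for y
    using sX tX that unfolding h_def by force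
  have hX: "h y \<in> IET_X" if "y \<in> IET_X" for y
  proof -
    consider "s \<le> y \<and> y < s + \<epsilon>" | "\<not> (s \<le> y \<and> y < s + \<epsilon>)" "t \<le> y \<and> y < t + \<epsilon>"
      | "\<not> (s \<le> y \<and> y < s + \<epsilon>)" "\<not> (t \<le> y \<and> y < t + \<epsilon>)" by blast
    thus ?thesis
    proof cases
      case 1 thus ?thesis using tX[of "y + (t - s)"] unfolding h_def by auto
    next
      case 2 thus ?thesis using sX[of "y - (t - s)"] unfolding h_def by auto
    next
      case 3 thus ?thesis using that unfolding h_def by auto
    qed
  qed
  have hb: "h \<in> bij_X"
  proof -
    have "bij_betw h IET_X IET_X" by (rule bij_betw_byWitness[of _ h]) (use hh hX in auto)
    thus ?thesis unfolding bij_X_def using hout by auto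
  qed
  have hp: "PIs {1} h" unfolding PIs_def
  proof (intro exI[of _ "{s, s + \<epsilon>, t, t + \<epsilon>}"] conjI allI impI)
    fix u v :: real assume uv: "0 \<le> u" "u < v" "v \<le> 1" "{s, s + \<epsilon>, t, t + \<epsilon>} \<inter> {u<..<v} = {}"
    have nin: "\<not> (u < s \<and> s < v)" "\<not> (u < s + \<epsilon> \<and> s + \<epsilon> < v)" "\<not> (u < t \<and> t < v)" "\<not> (u < t + \<epsilon> \<and> t + \<epsilon> < v)"
      using uv(4) by auto
    consider "s \<le> u \<and> v \<le> s + \<epsilon>" | "t \<le> u \<and> v \<le> t + \<epsilon>" | "\<not> (s \<le> u \<and> v \<le> s + \<epsilon>)" "\<not> (t \<le> u \<and> v \<le> t + \<epsilon>)"
      by blast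
    thus "\<exists>\<sigma>\<in>{1}. \<exists>c. \<forall>x\<in>{u<..<v}. h x = \<sigma> * x + c"
    proof cases
      case 1
      hence "\<forall>x\<in>{u<..<v}. h x = 1 * x + (t - s)" unfolding h_def by auto
      thus ?thesis by blast
    next
      case 2
      have "\<forall>x\<in>{u<..<v}. h x = 1 * x + (s - t)"
      proof
        fix x assume x: "x \<in> {u<..<v}"
        have "\<not> (s \<le> x \<and> x < s + \<epsilon>)" using st[of x] 2 x by auto
        thus "h x = 1 * x + (s - t)" using 2 x unfolding h_def by auto
      qed
      thus ?thesis by blast
    next
      case 3
      have "\<forall>x\<in>{u<..<v}. h x = 1 * x + 0"
      proof
        fix x assume x: "x \<in> {u<..<v}"
        have a: "\<not> (s \<le> x \<and> x < s + \<epsilon>)"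
        proof
          assume "s \<le> x \<and> x < s + \<epsilon>"
          hence "s \<le> u" "v \<le> s + \<epsilon>" using nin(1,2) x by auto
          thus False using 3 by auto
        qed
        have b: "\<not> (t \<le> x \<and> x < t + \<epsilon>)"
        proof
          assume "t \<le> x \<and> x < t + \<epsilon>"
          hence "t \<le> u" "v \<le> t + \<epsilon>" using nin(3,4) x by auto
          thus False using 3 by auto
        qed
        show "h x = 1 * x + 0" using a b unfolding h_def by auto
      qed
      thus ?thesis by blast
    qed
  qed simp
  have hP: "h \<in> IET_hat_plus" unfolding P_eq using hb hp by auto
  show ?thesis
  proof (intro bexI[OF _ hP] ballI)
    fix q assume qP: "q \<in> IET_hat_plus"
    have qb: "q \<in> bij_X" and qp: "PIs {1} q" using qP unfolding P_eq by auto
    show "invX f \<circ> h \<circ> f \<circ> invX q \<notin> S_fin"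
    proof
      assume "invX f \<circ> h \<circ> f \<circ> invX q \<in> S_fin"
      hence fin: "finite (supp (invX f \<circ> h \<circ> f \<circ> invX q))" unfolding N_eq by auto
      define k where "k = invX f \<circ> h \<circ> f"
      define D1 where "D1 = q -` supp (invX f \<circ> h \<circ> f \<circ> invX q)"
      have finD1: "finite D1" unfolding D1_def by (rule finite_vimageI[OF fin bijX_inj[OF qb]])
      have kq: "k x = q x" if "x \<notin> D1" for x
      proof -
        have "(invX f \<circ> h \<circ> f \<circ> invX q) (q x) = q x" using that unfolding D1_def supp_def by auto
        thus ?thesis unfolding k_def using invX_f[OF qb, of x] by simp
      qed
      obtain Fq where Fq: "finite Fq" "\<And>u v. 0 \<le> u \<Longrightarrow> u < v \<Longrightarrow> v \<le> 1 \<Longrightarrow> Fq \<inter> {u<..<v} = {} \<Longrightarrow>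
          (\<exists>\<sigma>\<in>{1}. \<exists>c. \<forall>x\<in>{u<..<v}. q x = \<sigma> * x + c)"
        using qp unfolding PIs_def by blast
      define \<alpha> where "\<alpha> = c1 - s - \<epsilon>"
      define \<beta> where "\<beta> = c1 - s"
      have ab: "\<alpha> < \<beta>" "u1 < \<alpha>" "\<beta> < v1" unfolding \<alpha>_def \<beta>_def s_def using \<epsilon> by auto
      have kflip: "k x = - x + (c1 + t - s - c2)" if "\<alpha> < x" "x < \<beta>" for x
      proof -
        have x1: "x \<in> {u1<..<v1}" using that ab by auto
        have fx: "f x = c1 - x" using I1(4) x1 by simp
        have hfx: "h (f x) = c1 - x + (t - s)" unfolding fx h_def using that unfolding \<alpha>_def \<beta>_def by auto
        define z where "z = c1 - x + (t - s) - c2"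
        have z2: "z \<in> {u2<..<v2}" using tJ[of "c1 - x + (t - s)"] that unfolding z_def \<alpha>_def \<beta>_def by auto
        have "f z = c1 - x + (t - s)" using I2(4) z2 unfolding z_def by simp
        hence "invX f (h (f x)) = z" using invX_f[OF fb, of z] hfx by simp
        thus ?thesis unfolding k_def z_def by simp
      qed
      obtain u v where uv: "\<alpha> \<le> u" "u < v" "v \<le> \<beta>" "(Fq \<union> D1) \<inter> {u<..<v} = {}"
        using subint[of "Fq \<union> D1" \<alpha> \<beta>] Fq(1) finD1 ab(1) by blast
      have "0 \<le> u" "v \<le> 1" using uv ab I1 by auto
      moreover have "Fq \<inter> {u<..<v} = {}" using uv(4) by auto
      ultimately obtain d where d: "\<forall>x\<in>{u<..<v}. q x = 1 * x + d" using Fq(2) uv(2) by blast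
      have eq: "- x + (c1 + t - s - c2) = x + d" if "x \<in> {u<..<v}" for x
      proof -
        have "x \<notin> D1" using uv(4) that by auto
        hence "k x = q x" by (rule kq)
        thus ?thesis using kflip[of x] d that uv by auto
      qed
      have "- ((2 * u + v) / 3) + (c1 + t - s - c2) = (2 * u + v) / 3 + d" by (rule eq) (use uv in auto)
      moreover have "- ((u + 2 * v) / 3) + (c1 + t - s - c2) = (u + 2 * v) / 3 + d" by (rule eq) (use uv in auto)
      ultimately show False using uv(2) by simp
    qed
  qed
qed

theorem proposition5p1:
  shows "normalizer IET_bowtie IET_plus = IET_pm"
proof -
  have PG: "IET_hat_plus \<subseteq> carrier IET_hat_bowtie" using subgroup.subset[OF subgroup_P] .
  have key: "\<exists>p\<in>IET_hat_plus. \<forall>q\<in>IET_hat_plus.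
      inv\<^bsub>IET_hat_bowtie\<^esub> f \<otimes>\<^bsub>IET_hat_bowtie\<^esub> p \<otimes>\<^bsub>IET_hat_bowtie\<^esub> f \<otimes>\<^bsub>IET_hat_bowtie\<^esub> inv\<^bsub>IET_hat_bowtie\<^esub> q \<notin> S_fin"
    if f: "f \<in> carrier IET_hat_bowtie" "f \<notin> IET_hat_plus" "rho_X \<otimes>\<^bsub>IET_hat_bowtie\<^esub> f \<notin> IET_hat_plus" for f
  proof -
    obtain p where p: "p \<in> IET_hat_plus" "\<forall>q\<in>IET_hat_plus. invX f \<circ> p \<circ> f \<circ> invX q \<notin> S_fin"
      using key_concrete[OF f(1,2)] f(3) by auto
    show ?thesis
    proof (intro bexI[OF _ p(1)] ballI)
      fix q assume q: "q \<in> IET_hat_plus"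
      hence "q \<in> carrier IET_hat_bowtie" using PG by auto
      thus "inv\<^bsub>IET_hat_bowtie\<^esub> f \<otimes>\<^bsub>IET_hat_bowtie\<^esub> p \<otimes>\<^bsub>IET_hat_bowtie\<^esub> f \<otimes>\<^bsub>IET_hat_bowtie\<^esub> inv\<^bsub>IET_hat_bowtie\<^esub> q \<notin> S_fin"
        using p(2) q inv_G[OF f(1)] inv_G by simp
    qed
  qed
  have rP: "rho_X \<otimes>\<^bsub>IET_hat_bowtie\<^esub> p \<otimes>\<^bsub>IET_hat_bowtie\<^esub> rho_X \<in> IET_hat_plus" if "p \<in> IET_hat_plus" for p
    using rho_conj[OF that] by simp
  have r2: "rho_X \<otimes>\<^bsub>IET_hat_bowtie\<^esub> rho_X = \<one>\<^bsub>IET_hat_bowtie\<^esub>" using rho_sq by simp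
  show ?thesis
    using abstract_normalizer[OF group_G normal_N subgroup_P rho_G r2 rP key]
    unfolding IET_bowtie_def IET_plus_def IET_pm_def IET_minus_def IET_R_def by simp
qed

end
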